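(* Let $G=(G_1,\dots,G_n)$ be a mean zero Gaussian vector with strictly positive definite (irreducible) covariance matrix $\Gamma$, and let $\alpha\in\mathbb{R}$. For $t>0$ and a diagonal $n\times n$ matrix $S$ with diagonal entries $s_i=S_{i,i}\in[0,1]$, put $\Lambda=t(I-S)$ and $$\Phi(t,S)=\log \mathbb{E}\Big[\exp\Big(-\tfrac12\sum_{i=1}^n \Lambda_{i,i}(G_i+\alpha)^2\Big)\Big],$$ regarded as a power series in $s_1,\dots,s_n$ about $S=0$. Let $\Phi_1(t,S)=\Phi(t,S)|_{\alpha=0}$ and $\Phi_2(t,S)=\Phi(t,S)-\Phi_1(t,S)$, so that $\Phi=\Phi_1+\Phi_2$. Let $Q=Q(t)=[I+(t\Gamma)^{-1}]^{-1}=I-(I+t\Gamma)^{-1}$, let $D=(D_1,\dots,D_n)$ with $D_i=\sum_{k=1}^n(\Gamma^{-1})_{i,k}$ (the $i$-th row sum of $\Gamma^{-1}$), and let $\mathbf 1=(1,\dots,1)$. Then for all $\alpha\in\mathbb{R}$ and all $t$ sufficiently large, $$\Phi_2(t,S)=\frac{\alpha^2}{2}\Big(-\mathbf 1\cdot\Gamma^{-1}\cdot\mathbf 1^T + D\cdot\Big(\frac1t\sum_{m=1}^{\infty}(QS)^m\Big)\cdot D^T\Big)\big(1+O(1/t)\big),$$ where $O(1/t)$ refers to $t\to\infty$.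
   Context: All covariance matrices are assumed irreducible (not a direct sum of square matrices). $\mathbf 1$ denotes the $n$-dimensional vector with all entries $1$. *)

theory Defs
  imports "HOL-Analysis.Analysis"
begin

primrec matpow :: "real^'n^'n \<Rightarrow> nat \<Rightarrow> real^'n^'n" where
  "matpow A 0 = mat 1"
| "matpow A (Suc m) = A ** matpow A m"

definition pos_def_matrix :: "real^'n^'n \<Rightarrow> bool" where
  "pos_def_matrix A \<longleftrightarrow> transpose A = A \<and> (\<forall>x. x \<noteq> 0 \<longrightarrow> x \<bullet> (A *v x) > 0)"

text \<open>Irreducible: not (up to a permutation of indices) a direct sum of two square blocks,
  i.e. there is no splitting of the index set into two nonempty parts I, J with
  A i j = 0 for all i in I, j in J.\<close>
definition irreducible_matrix :: "real^'n^'n \<Rightarrow> bool" where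
  "irreducible_matrix A \<longleftrightarrow>
     \<not> (\<exists>I :: 'n set. I \<noteq> {} \<and> I \<noteq> UNIV \<and> (\<forall>i\<in>I. \<forall>j\<in>UNIV - I. A $ i $ j = 0))"

definition gauss_density :: "real^'n^'n \<Rightarrow> real^'n \<Rightarrow> real" where
  "gauss_density Gm x =
     exp (- (x \<bullet> (matrix_inv Gm *v x)) / 2) / sqrt ((2 * pi) ^ CARD('n) * det Gm)"

definition Phi :: "real^'n^'n \<Rightarrow> real \<Rightarrow> real \<Rightarrow> real^'n^'n \<Rightarrow> real" where
  "Phi Gm \<alpha> t S =
     (let \<Lambda> = t *\<^sub>R (mat 1 - S) in
      ln (\<integral>x. gauss_density Gm x *
                 exp (- (1/2) * (\<Sum>i\<in>UNIV. \<Lambda> $ i $ i * (x $ i + \<alpha>)\<^sup>2)) \<partial>lborel))"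

definition Phi1 :: "real^'n^'n \<Rightarrow> real \<Rightarrow> real^'n^'n \<Rightarrow> real" where
  "Phi1 Gm t S = Phi Gm 0 t S"

definition Phi2 :: "real^'n^'n \<Rightarrow> real \<Rightarrow> real \<Rightarrow> real^'n^'n \<Rightarrow> real" where
  "Phi2 Gm \<alpha> t S = Phi Gm \<alpha> t S - Phi1 Gm t S"

definition Qmat :: "real^'n^'n \<Rightarrow> real \<Rightarrow> real^'n^'n" where
  "Qmat Gm t = matrix_inv (mat 1 + matrix_inv (t *\<^sub>R Gm))"

definition Dvec :: "real^'n^'n \<Rightarrow> real^'n" where
  "Dvec Gm = (\<chi> i. \<Sum>k\<in>UNIV. matrix_inv Gm $ i $ k)"

definition ones :: "real^'n" where
  "ones = (\<chi> i. 1)"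

end

theory Submission
  imports Defs "HOL-Probability.Distributions"
begin


lemma matrix_inv_props:
  fixes M :: "real^'n^'n"
  assumes "invertible M"
  shows "M ** matrix_inv M = mat 1" "matrix_inv M ** M = mat 1"
  using someI_ex[OF assms[unfolded invertible_def]] unfolding matrix_inv_def by auto

lemma matrix_inv_unique:
  fixes M N :: "real^'n^'n"
  assumes "M ** N = mat 1"
  shows "matrix_inv M = N"
proof -
  have inv: "invertible M" using assms invertible_right_inverse by blast
  have "matrix_inv M = matrix_inv M ** (M ** N)" using assms by simp
  also have "\<dots> = N" by (simp add: matrix_mul_assoc matrix_inv_props[OF inv])
  finally show ?thesis .
qed

lemma inj_invertible:
  fixes M :: "real^'n^'n"
  assumes "\<And>x. M *v x = 0 \<Longrightarrow> x = 0"
  shows "invertible M"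
proof -
  have "inj ((*v) M)"
    by (metis (no_types, lifting) assms injI matrix_vector_mult_diff_distrib right_minus_eq)
  then show ?thesis using matrix_left_invertible_injective invertible_left_inverse by blast
qed

lemma dot_transpose_sym:
  fixes M :: "real^'n^'n"
  assumes "transpose M = M"
  shows "x \<bullet> (M *v y) = y \<bullet> (M *v x)"
proof -
  have "x \<bullet> (M *v y) = (x v* M) \<bullet> y" by (simp add: dot_lmul_matrix)
  also have "x v* M = transpose M *v x" by simp
  finally show ?thesis using assms by (simp add: inner_commute)
qed

lemma transpose_matrix_inv:
  fixes M :: "real^'n^'n"
  assumes "invertible M" "transpose M = M"
  shows "transpose (matrix_inv M) = matrix_inv M"
proof -
  have "M ** transpose (matrix_inv M) = mat 1"
    by (metis assms(2) matrix_inv_props(2)[OF assms(1)] matrix_transpose_mul transpose_mat)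
  then show ?thesis using matrix_inv_unique by metis
qed

lemma posdef_invertible:
  fixes M :: "real^'n^'n"
  assumes "\<And>x. x \<noteq> 0 \<Longrightarrow> x \<bullet> (M *v x) > 0"
  shows "invertible M"
  by (rule inj_invertible) (metis assms inner_zero_right less_irrefl)

lemma posdef_lower:
  fixes M :: "real^'n^'n"
  assumes "\<And>x. x \<noteq> 0 \<Longrightarrow> x \<bullet> (M *v x) > 0"
  shows "\<exists>\<mu>>0. \<forall>x. x \<bullet> (M *v x) \<ge> \<mu> * (norm x)\<^sup>2"
proof -
  have cont: "continuous_on (sphere 0 1) (\<lambda>x::real^'n. x \<bullet> (M *v x))"
    by (intro continuous_intros linear_continuous_on bounded_linear_intros) 
  have ne: "sphere (0::real^'n) 1 \<noteq> {}" by simp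
  obtain u where u: "u \<in> sphere 0 1" and umin: "\<forall>y\<in>sphere 0 1. u \<bullet> (M *v u) \<le> y \<bullet> (M *v y)"
    using continuous_attains_inf[OF compact_sphere ne cont] by blast
  have "u \<noteq> 0" using u by auto
  then have pos: "u \<bullet> (M *v u) > 0" using assms by blast
  show ?thesis
  proof (intro exI[of _ "u \<bullet> (M *v u)"] conjI allI pos)
    fix x :: "real^'n"
    show "u \<bullet> (M *v u) * (norm x)\<^sup>2 \<le> x \<bullet> (M *v x)"
    proof (cases "x = 0")
      case True then show ?thesis by simp
    next
      case False
      let ?y = "(1 / norm x) *\<^sub>R x"
      have "?y \<in> sphere 0 1" using False by simp
      then have "u \<bullet> (M *v u) \<le> ?y \<bullet> (M *v ?y)" using umin by blast
      also have "?y \<bullet> (M *v ?y) = (x \<bullet> (M *v x)) / (norm x)\<^sup>2"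
        by (simp add: matrix_vector_mult_scaleR power2_eq_square)
      finally show ?thesis using False by (simp add: field_simps)
    qed
  qed
qed



lemma gauss1_integrable:
  fixes c :: real assumes c: "c > 0"
  shows "integrable lborel (\<lambda>x::real. exp (- c * x\<^sup>2))"
proof -
  define \<sigma> where "\<sigma> = sqrt (1 / (2 * c))"
  have s: "\<sigma> > 0" using c by (simp add: \<sigma>_def)
  have s2: "\<sigma>\<^sup>2 = 1 / (2 * c)" using c by (simp add: \<sigma>_def)
  have "integrable lborel (\<lambda>x. sqrt (2 * pi * \<sigma>\<^sup>2) * normal_density 0 \<sigma> x)"
    using s by (intro integrable_mult_right integrable_normal_density) auto
  moreover have "sqrt (2 * pi * \<sigma>\<^sup>2) * normal_density 0 \<sigma> x = exp (- c * x\<^sup>2)" for x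
  proof -
    have "sqrt (2 * pi * \<sigma>\<^sup>2) > 0" using s by (simp add: pi_gt_zero)
    moreover have "x\<^sup>2 / (2 * \<sigma>\<^sup>2) = c * x\<^sup>2" using c s by (simp add: s2 field_simps)
    ultimately show ?thesis using s by (simp add: normal_density_def)
  qed
  ultimately show ?thesis by simp
qed

lemma gauss_integrable:
  fixes c :: real assumes c: "c > 0"
  shows "integrable lborel (\<lambda>x::'a::euclidean_space. exp (- c * (norm x)\<^sup>2))"
proof (unfold integrable_iff_bounded, intro conjI)
  show "(\<lambda>x::'a. exp (- c * (norm x)\<^sup>2)) \<in> borel_measurable lborel" by measurable
  have eq: "ennreal (norm (exp (- c * (norm x)\<^sup>2))) = (\<Prod>b\<in>Basis. ennreal (exp (- c * (x \<bullet> b)\<^sup>2)))"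
    for x :: 'a
  proof -
    have "(norm x)\<^sup>2 = (\<Sum>b\<in>Basis. (x \<bullet> b)\<^sup>2)"
      unfolding power2_norm_eq_inner by (subst euclidean_inner) (simp add: power2_eq_square)
    then have "exp (- c * (norm x)\<^sup>2) = (\<Prod>b\<in>Basis. exp (- c * (x \<bullet> b)\<^sup>2))"
      by (simp add: sum_distrib_left exp_sum[symmetric])
    then show ?thesis by (simp add: prod_ennreal abs_of_nonneg prod_nonneg)
  qed
  have "(\<integral>\<^sup>+x. ennreal (norm (exp (- c * (norm (x::'a))\<^sup>2))) \<partial>lborel)
      = (\<integral>\<^sup>+x. (\<Prod>b\<in>Basis. ennreal (exp (- c * ((x::'a) \<bullet> b)\<^sup>2))) \<partial>lborel)"
    by (simp only: eq)
  also have "\<dots> = (\<Prod>b\<in>(Basis::'a set). (\<integral>\<^sup>+x. ennreal (exp (- c * x\<^sup>2)) \<partial>lborel))"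
    by (rule nn_integral_lborel_prod[where f="\<lambda>b x. ennreal (exp (- c * x\<^sup>2))"]) auto
  also have "\<dots> < \<infinity>"
  proof -
    have "(\<integral>\<^sup>+x. ennreal (norm (exp (- c * x\<^sup>2))) \<partial>lborel) < \<infinity>"
      using gauss1_integrable[OF c] unfolding integrable_iff_bounded by blast
    then have "(\<integral>\<^sup>+x. ennreal (exp (- c * x\<^sup>2)) \<partial>lborel) < \<infinity>" by simp
    then show ?thesis by (simp add: power_less_top_ennreal)
  qed
  finally show "(\<integral>\<^sup>+x. ennreal (norm (exp (- c * (norm (x::'a))\<^sup>2))) \<partial>lborel) < \<infinity>" .
qed

lemma quad_continuous: "continuous_on UNIV (\<lambda>x::real^'n. x \<bullet> (M *v x))"
  by (intro continuous_intros linear_continuous_on bounded_linear_intros)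

lemma quad_measurable[measurable]: "(\<lambda>x::real^'n. x \<bullet> (M *v x)) \<in> borel_measurable borel"
  by (rule borel_measurable_continuous_onI[OF quad_continuous])

lemma gaussJ_pos:
  fixes B :: "real^'n^'n"
  assumes "\<And>x. x \<noteq> 0 \<Longrightarrow> x \<bullet> (B *v x) > 0"
  shows "integrable lborel (\<lambda>x. exp (- (x \<bullet> (B *v x)) / 2))"
    "(\<integral>x. exp (- (x \<bullet> (B *v x)) / 2) \<partial>lborel) > 0"
proof -
  obtain \<mu> where mu: "\<mu> > 0" "\<And>x. x \<bullet> (B *v x) \<ge> \<mu> * (norm x)\<^sup>2"
    using posdef_lower[OF assms] by blast
  show int: "integrable lborel (\<lambda>x. exp (- (x \<bullet> (B *v x)) / 2))"
  proof (rule Bochner_Integration.integrable_bound[OF gauss_integrable[of "\<mu>/2"]])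
    show "\<mu>/2 > 0" using mu by simp
    show "(\<lambda>x. exp (- (x \<bullet> (B *v x)) / 2)) \<in> borel_measurable lborel" by measurable
    show "AE x in lborel. norm (exp (- (x \<bullet> (B *v x)) / 2)) \<le> norm (exp (- (\<mu>/2) * (norm x)\<^sup>2))"
      using mu(2) by (auto intro!: AE_I2)
  qed
  have "(\<integral>x. exp (- (x \<bullet> (B *v x)) / 2) \<partial>lborel) \<ge> 0"
    by (intro integral_nonneg_AE) auto
  moreover have "(\<integral>x. exp (- (x \<bullet> (B *v x)) / 2) \<partial>lborel) \<noteq> 0"
  proof
    assume "(\<integral>x. exp (- (x \<bullet> (B *v x)) / 2) \<partial>lborel) = 0"
    then have "AE x in lborel. exp (- (x \<bullet> (B *v x)) / 2) = (0::real)"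
      using integral_nonneg_eq_0_iff_AE[OF int] by auto
    then have "AE (x::real^'n) in lborel. False" by simp
    then have "ae_filter lborel = (bot :: (real^'n) filter)" using trivial_limit_def by blast
    then show False unfolding ae_filter_eq_bot_iff by simp
  qed
  ultimately show "(\<integral>x. exp (- (x \<bullet> (B *v x)) / 2) \<partial>lborel) > 0" by linarith
qed

lemma lborel_translate_integral:
  fixes f :: "real^'n \<Rightarrow> real"
  assumes [measurable]: "f \<in> borel_measurable borel"
  shows "(\<integral>x. f (w + x) \<partial>lborel) = (\<integral>x. f x \<partial>lborel)"
proof -
  have "(\<integral>x. f x \<partial>lborel) = (\<integral>x. f x \<partial>(distr lborel borel ((+) w)))"
    by (simp add: lborel_distr_plus)
  also have "\<dots> = (\<integral>x. f (w + x) \<partial>lborel)"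
    by (rule integral_distr) auto
  finally show ?thesis by simp
qed



lemma quad_identity:
  fixes A L :: "real^'n^'n"
  assumes sA: "transpose A = A" and sL: "transpose L = L"
    and By: "(A + L) *v y = L *v v"
  shows "x \<bullet> (A *v x) + (x + v) \<bullet> (L *v (x + v))
        = (x + y) \<bullet> ((A + L) *v (x + y)) + (v \<bullet> (L *v v) - (L *v v) \<bullet> y)"
proof -
  have sB: "transpose (A + L) = A + L" using sA sL by (simp add: transpose_def vec_eq_iff)
  have e1: "y \<bullet> ((A + L) *v x) = x \<bullet> (L *v v)"
    using dot_transpose_sym[OF sB, of y x] By by simp
  have e2: "v \<bullet> (L *v x) = x \<bullet> (L *v v)" using dot_transpose_sym[OF sL, of v x] .
  have e3: "y \<bullet> ((A + L) *v y) = y \<bullet> (L *v v)" using By by simp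
  have "(x + y) \<bullet> ((A + L) *v (x + y)) = x \<bullet> (A *v x) + x \<bullet> (L *v x) + 2 * (x \<bullet> (L *v v)) + y \<bullet> (L *v v)"
    using e1 e3 By by (simp add: matrix_vector_right_distrib matrix_vector_mult_add_rdistrib inner_add_left inner_add_right)
  moreover have "(x + v) \<bullet> (L *v (x + v)) = x \<bullet> (L *v x) + 2 * (x \<bullet> (L *v v)) + v \<bullet> (L *v v)"
    using e2 by (simp add: matrix_vector_right_distrib inner_add_left inner_add_right)
  ultimately show ?thesis by (simp add: inner_commute)
qed

lemma gauss_shift:
  fixes A L :: "real^'n^'n" and v :: "real^'n" and c :: real
  assumes pA: "\<And>x. x \<noteq> 0 \<Longrightarrow> x \<bullet> (A *v x) > 0" and sA: "transpose A = A"
    and sL: "transpose L = L" and pL: "\<And>x. x \<bullet> (L *v x) \<ge> 0"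
  shows "(\<integral>x. c * exp (- (x \<bullet> (A *v x)) / 2) * exp (- (1/2) * ((x + v) \<bullet> (L *v (x + v)))) \<partial>lborel)
       = c * exp (- (v \<bullet> (L *v v) - (L *v v) \<bullet> (matrix_inv (A + L) *v (L *v v))) / 2)
           * (\<integral>x. exp (- (x \<bullet> ((A + L) *v x)) / 2) \<partial>lborel)"
proof -
  define B where "B = A + L"
  have pB: "x \<noteq> 0 \<Longrightarrow> x \<bullet> (B *v x) > 0" for x
    using pA[of x] pL[of x] by (simp add: B_def matrix_vector_mult_add_rdistrib inner_add_right add_pos_nonneg)
  have iB: "invertible B" using posdef_invertible pB by blast
  define y where "y = matrix_inv B *v (L *v v)"
  have By: "B *v y = L *v v" unfolding y_def
    by (simp add: matrix_vector_mul_assoc matrix_mul_assoc matrix_inv_props[OF iB])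
  define \<kappa> where "\<kappa> = v \<bullet> (L *v v) - (L *v v) \<bullet> y"
  define g where "g = (\<lambda>x. exp (- (x \<bullet> (B *v x)) / 2))"
  have pt: "c * exp (- (x \<bullet> (A *v x)) / 2) * exp (- (1/2) * ((x + v) \<bullet> (L *v (x + v))))
      = (c * exp (- \<kappa> / 2)) * g (y + x)" for x
  proof -
    have q: "x \<bullet> (A *v x) + (x + v) \<bullet> (L *v (x + v)) = (x + y) \<bullet> (B *v (x + y)) + \<kappa>"
      using quad_identity[OF sA sL, of y v x] By unfolding B_def \<kappa>_def by simp
    have "exp (- (x \<bullet> (A *v x)) / 2) * exp (- (1/2) * ((x + v) \<bullet> (L *v (x + v))))
        = exp (- (x \<bullet> (A *v x) + (x + v) \<bullet> (L *v (x + v))) / 2)"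
      by (simp add: exp_add[symmetric] field_simps)
    also have "\<dots> = exp (- \<kappa> / 2) * g (y + x)"
      unfolding q g_def by (simp add: exp_add[symmetric] field_simps add.commute)
    finally show ?thesis by simp
  qed
  have "(\<integral>x. c * exp (- (x \<bullet> (A *v x)) / 2) * exp (- (1/2) * ((x + v) \<bullet> (L *v (x + v)))) \<partial>lborel)
      = (\<integral>x. (c * exp (- \<kappa> / 2)) * g (y + x) \<partial>lborel)" by (simp only: pt)
  also have "\<dots> = (c * exp (- \<kappa> / 2)) * (\<integral>x. g (y + x) \<partial>lborel)" by simp
  also have "(\<integral>x. g (y + x) \<partial>lborel) = (\<integral>x. g x \<partial>lborel)"
    by (rule lborel_translate_integral) (simp add: g_def)
  finally show ?thesis unfolding g_def \<kappa>_def y_def B_def by simp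
qed



lemma det_pos:
  fixes M :: "real^'n^'n"
  assumes pM: "\<And>x. x \<noteq> 0 \<Longrightarrow> x \<bullet> (M *v x) > 0"
  shows "det M > 0"
proof (rule ccontr)
  assume "\<not> det M > 0"
  then have le: "det M \<le> 0" by simp
  define f where "f = (\<lambda>s::real. det ((1 - s) *\<^sub>R mat 1 + s *\<^sub>R M))"
  have ent: "((1 - s) *\<^sub>R mat 1 + s *\<^sub>R M) $ i $ j = (1 - s) * (mat 1 :: real^'n^'n) $ i $ j + s * M $ i $ j"
    for s i j by simp
  have cont: "continuous_on {0..1} f"
    unfolding f_def det_def ent by (intro continuous_intros)
  have "f 1 \<le> 0" using le by (simp add: f_def)
  moreover have "0 \<le> f 0" by (simp add: f_def)
  ultimately obtain s where s: "0 \<le> s" "s \<le> 1" "f s = 0"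
    using IVT2'[of f 1 0 0, OF _ _ _ cont] by auto
  define N where "N = (1 - s) *\<^sub>R mat 1 + s *\<^sub>R (M :: real^'n^'n)"
  have pN: "x \<bullet> (N *v x) > 0" if "x \<noteq> 0" for x
  proof -
    have "x \<bullet> (N *v x) = (1 - s) * (x \<bullet> x) + s * (x \<bullet> (M *v x))"
      by (simp add: N_def matrix_vector_mult_add_rdistrib scaleR_matrix_vector_assoc[symmetric] inner_add_right)
    moreover have "x \<bullet> x > 0" using that by simp
    moreover have "x \<bullet> (M *v x) > 0" using pM that by blast
    moreover have "(1 - s) * (x \<bullet> x) \<ge> 0" using s by simp
    ultimately show ?thesis using s
    proof (cases "s = 0")
      case False
      then have "s * (x \<bullet> (M *v x)) > 0" using s \<open>x \<bullet> (M *v x) > 0\<close> by simp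
      then show ?thesis using \<open>x \<bullet> (N *v x) = _\<close> \<open>(1 - s) * (x \<bullet> x) \<ge> 0\<close> by linarith
    qed simp
  qed
  have "invertible N" using posdef_invertible pN by blast
  then have "det N \<noteq> 0" using invertible_det_nz by blast
  with s(3) show False by (simp add: f_def N_def)
qed



lemma inv_posdef:
  fixes Gm :: "real^'n^'n"
  assumes "pos_def_matrix Gm"
  shows "invertible Gm" "transpose (matrix_inv Gm) = matrix_inv Gm"
    "\<And>x. x \<noteq> 0 \<Longrightarrow> x \<bullet> (matrix_inv Gm *v x) > 0"
proof -
  have sG: "transpose Gm = Gm" and pG: "\<And>x. x \<noteq> 0 \<Longrightarrow> x \<bullet> (Gm *v x) > 0"
    using assms unfolding pos_def_matrix_def by auto
  show iG: "invertible Gm" using posdef_invertible pG by blast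
  show "transpose (matrix_inv Gm) = matrix_inv Gm" using transpose_matrix_inv[OF iG sG] .
  fix x :: "real^'n" assume x: "x \<noteq> 0"
  define z where "z = matrix_inv Gm *v x"
  have Gz: "Gm *v z = x" unfolding z_def
    by (simp add: matrix_vector_mul_assoc matrix_inv_props[OF iG])
  then have "z \<noteq> 0" using x by auto
  then have "z \<bullet> (Gm *v z) > 0" using pG by blast
  then show "x \<bullet> (matrix_inv Gm *v x) > 0"
    using Gz by (simp add: z_def inner_commute)
qed

definition Lam :: "real \<Rightarrow> real^'n^'n \<Rightarrow> real^'n^'n" where
  "Lam t S = t *\<^sub>R (mat 1 - S)"

lemma Lam_entry: "Lam t S $ i $ j = t * ((mat 1 :: real^'n^'n) $ i $ j - S $ i $ j)"
  by (simp add: Lam_def)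

lemma Lam_mult:
  assumes diag: "\<forall>i j. i \<noteq> j \<longrightarrow> S $ i $ j = 0"
  shows "Lam t S *v x = (\<chi> i. t * (1 - S $ i $ i) * x $ i)"
proof -
  have "(Lam t S *v x) $ i = t * (1 - S $ i $ i) * x $ i" for i
  proof -
    have "(Lam t S *v x) $ i = (\<Sum>j\<in>UNIV. Lam t S $ i $ j * x $ j)"
      by (simp add: matrix_vector_mult_def)
    also have "\<dots> = (\<Sum>j\<in>UNIV. if j = i then t * (1 - S $ i $ i) * x $ i else 0)"
      by (rule sum.cong) (auto simp: Lam_entry mat_def diag)
    finally show ?thesis by simp
  qed
  then show ?thesis by (simp add: vec_eq_iff)
qed

lemma Lam_sym:
  assumes diag: "\<forall>i j. i \<noteq> j \<longrightarrow> S $ i $ j = 0"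
  shows "transpose (Lam t S) = Lam t S"
  by (simp add: vec_eq_iff transpose_def Lam_entry mat_def) (metis diag)

lemma Lam_quad:
  assumes diag: "\<forall>i j. i \<noteq> j \<longrightarrow> S $ i $ j = 0"
  shows "x \<bullet> (Lam t S *v y) = (\<Sum>i\<in>UNIV. t * (1 - S $ i $ i) * x $ i * y $ i)"
  by (simp add: Lam_mult[OF diag] inner_vec_def mult_ac)

lemma Lam_psd:
  assumes diag: "\<forall>i j. i \<noteq> j \<longrightarrow> S $ i $ j = 0" and "t \<ge> 0" and "\<forall>i. S $ i $ i \<le> 1"
  shows "x \<bullet> (Lam t S *v x) \<ge> 0"
  unfolding Lam_quad[OF diag] using assms by (auto intro!: sum_nonneg simp: mult.assoc)

lemma Phi_formula:
  fixes Gm :: "real^'n^'n"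
  assumes pd: "pos_def_matrix Gm"
    and diag: "\<forall>i j. i \<noteq> j \<longrightarrow> S $ i $ j = 0" and t: "t \<ge> 0" and S1: "\<forall>i. S $ i $ i \<le> 1"
  defines "c \<equiv> 1 / sqrt ((2 * pi) ^ CARD('n) * det Gm)"
  defines "L \<equiv> Lam t S"
  defines "B \<equiv> matrix_inv Gm + L"
  defines "J \<equiv> (\<integral>x. exp (- (x \<bullet> (B *v x)) / 2) \<partial>lborel)"
  shows "Phi Gm \<alpha> t S = ln (c * exp (- (((\<alpha> *\<^sub>R ones) \<bullet> (L *v (\<alpha> *\<^sub>R ones))
            - (L *v (\<alpha> *\<^sub>R ones)) \<bullet> (matrix_inv B *v (L *v (\<alpha> *\<^sub>R ones))))) / 2) * J)"
proof -
  note iv = inv_posdef[OF pd]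
  have sL: "transpose L = L" unfolding L_def using Lam_sym[OF diag] .
  have pL: "\<And>x. x \<bullet> (L *v x) \<ge> 0" unfolding L_def using Lam_psd[OF diag t S1] .
  have sum_eq: "(\<Sum>i\<in>UNIV. (t *\<^sub>R (mat 1 - S)) $ i $ i * (x $ i + \<alpha>)\<^sup>2)
      = (x + \<alpha> *\<^sub>R ones) \<bullet> (L *v (x + \<alpha> *\<^sub>R ones))" for x :: "real^'n"
    unfolding L_def Lam_quad[OF diag]
    by (intro sum.cong) (auto simp: ones_def power2_eq_square mult_ac mat_def)
  have pt: "gauss_density Gm x * exp (- (1/2) * (\<Sum>i\<in>UNIV. (t *\<^sub>R (mat 1 - S)) $ i $ i * (x $ i + \<alpha>)\<^sup>2))
     = c * exp (- (x \<bullet> (matrix_inv Gm *v x)) / 2) * exp (- (1/2) * ((x + \<alpha> *\<^sub>R ones) \<bullet> (L *v (x + \<alpha> *\<^sub>R ones))))"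
    for x
    unfolding sum_eq gauss_density_def c_def by simp
  show ?thesis
    unfolding Phi_def Let_def pt
    using gauss_shift[OF iv(3) iv(2) sL pL, of c "\<alpha> *\<^sub>R ones"]
    unfolding B_def J_def by simp
qed



lemma Phi2_formula:
  fixes Gm :: "real^'n^'n"
  assumes pd: "pos_def_matrix Gm"
    and diag: "\<forall>i j. i \<noteq> j \<longrightarrow> S $ i $ j = 0" and t: "t \<ge> 0" and S1: "\<forall>i. S $ i $ i \<le> 1"
  shows "Phi2 Gm \<alpha> t S = - (\<alpha>\<^sup>2 / 2) * (ones \<bullet> (Lam t S *v ones)
      - (Lam t S *v ones) \<bullet> (matrix_inv (matrix_inv Gm + Lam t S) *v (Lam t S *v ones)))"
proof -
  define c where "c = 1 / sqrt ((2 * pi) ^ CARD('n) * det Gm)"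
  define L where "L = Lam t S"
  define B where "B = matrix_inv Gm + L"
  define J where "J = (\<integral>x. exp (- (x \<bullet> (B *v x)) / 2) \<partial>lborel)"
  define E where "E = ones \<bullet> (L *v ones) - (L *v ones) \<bullet> (matrix_inv B *v (L *v ones))"
  note iv = inv_posdef[OF pd]
  have pG: "\<And>x. x \<noteq> 0 \<Longrightarrow> x \<bullet> (Gm *v x) > 0" using pd unfolding pos_def_matrix_def by auto
  have "det Gm > 0" using det_pos[OF pG] .
  then have c: "c > 0" unfolding c_def by simp
  have pL: "\<And>x. x \<bullet> (L *v x) \<ge> 0" unfolding L_def using Lam_psd[OF diag t S1] .
  have pB: "x \<noteq> 0 \<Longrightarrow> x \<bullet> (B *v x) > 0" for x
    using iv(3)[of x] pL[of x] by (simp add: B_def matrix_vector_mult_add_rdistrib inner_add_right add_pos_nonneg)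
  have J: "J > 0" unfolding J_def using gaussJ_pos(2)[OF pB] by blast
  have k: "((\<alpha> *\<^sub>R ones) \<bullet> (L *v (\<alpha> *\<^sub>R ones))
            - (L *v (\<alpha> *\<^sub>R ones)) \<bullet> (matrix_inv B *v (L *v (\<alpha> *\<^sub>R ones)))) = \<alpha>\<^sup>2 * E"
    for \<alpha> :: real
    by (simp add: E_def matrix_scaleR_vector_ac[symmetric] matrix_vector_mult_scaleR power2_eq_square algebra_simps)
  have P: "Phi Gm \<alpha> t S = ln (c * exp (- (\<alpha>\<^sup>2 * E) / 2) * J)" for \<alpha>
    using Phi_formula[OF pd diag t S1, of \<alpha>] unfolding c_def[symmetric] L_def[symmetric] B_def[symmetric]
      J_def[symmetric] k .
  have "Phi2 Gm \<alpha> t S = ln (c * exp (- (\<alpha>\<^sup>2 * E) / 2) * J) - ln (c * exp (- (0\<^sup>2 * E) / 2) * J)"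
    unfolding Phi2_def Phi1_def P by simp
  also have "\<dots> = - (\<alpha>\<^sup>2 / 2) * E"
    using c J by (simp add: ln_mult)
  finally show ?thesis unfolding E_def L_def B_def .
qed



lemma matpow_comm: "matpow P m ** P = P ** matpow P m"
  by (induction m) (simp_all add: matrix_mul_assoc[symmetric])

lemma matpow_Suc': "matpow P (Suc m) = matpow P m ** P"
  by (simp add: matpow_comm)

lemma mm_add_rdistrib: "((A::real^'n^'n) + B) ** C = A ** C + B ** C"
  by (simp add: matrix_matrix_mult_def vec_eq_iff distrib_right sum.distrib)
lemma mm_sub_rdistrib: "((A::real^'n^'n) - B) ** C = A ** C - B ** C"
  by (simp add: matrix_matrix_mult_def vec_eq_iff left_diff_distrib sum_subtractf)
lemma mm_sub_ldistrib: "(C::real^'n^'n) ** (A - B) = C ** A - C ** B"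
  by (simp add: matrix_matrix_mult_def vec_eq_iff right_diff_distrib sum_subtractf)

lemma bl_left: "bounded_linear (\<lambda>X::real^'n^'n. M ** X)"
proof -
  have "linear (\<lambda>X::real^'n^'n. M ** X)"
    by (rule linearI) (simp_all add: matrix_add_ldistrib matrix_scalar_ac scalar_matrix_assoc[symmetric])
  then show ?thesis using linear_conv_bounded_linear by blast
qed

lemma bl_right: "bounded_linear (\<lambda>X::real^'n^'n. X ** M)"
proof -
  have "linear (\<lambda>X::real^'n^'n. X ** M)"
    by (rule linearI) (simp_all add: mm_add_rdistrib scalar_matrix_assoc)
  then show ?thesis using linear_conv_bounded_linear by blast
qed

lemma neumann:
  fixes P :: "real^'n^'n"
  assumes sm: "summable (\<lambda>m. matpow P (Suc m))"
  shows "(mat 1 - P) ** (mat 1 + (\<Sum>m. matpow P (Suc m))) = mat 1"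
    "(mat 1 + (\<Sum>m. matpow P (Suc m))) ** (mat 1 - P) = mat 1"
proof -
  define N where "N = (\<Sum>m. matpow P (Suc m))"
  have s: "(\<lambda>m. matpow P (Suc m)) sums N" using sm unfolding N_def by (rule summable_sums)
  have z: "(\<lambda>m. matpow P (Suc m)) \<longlonglongrightarrow> 0" using summable_LIMSEQ_zero[OF sm] .
  have tel: "(\<lambda>m. matpow P (Suc m) - matpow P (Suc (Suc m))) sums (matpow P (Suc 0) - 0)"
    by (rule telescope_sums'[OF z])
  have s1: "(\<lambda>m. (mat 1 - P) ** matpow P (Suc m)) sums ((mat 1 - P) ** N)"
    using bounded_linear.sums[OF bl_left s] .
  have s2: "(\<lambda>m. matpow P (Suc m) ** (mat 1 - P)) sums (N ** (mat 1 - P))"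
    using bounded_linear.sums[OF bl_right s] .
  have e1: "(mat 1 - P) ** matpow P (Suc m) = matpow P (Suc m) - matpow P (Suc (Suc m))" for m
    by (simp add: mm_sub_rdistrib)
  have e2: "matpow P (Suc m) ** (mat 1 - P) = matpow P (Suc m) - matpow P (Suc (Suc m))" for m
    by (simp only: mm_sub_ldistrib matrix_mul_rid matpow_Suc'[of P "Suc m"])
  have "(mat 1 - P) ** N = P" using sums_unique2[OF s1[unfolded e1] tel] by simp
  then show "(mat 1 - P) ** (mat 1 + (\<Sum>m. matpow P (Suc m))) = mat 1"
    unfolding N_def[symmetric] by (simp add: matrix_add_ldistrib)
  have h: "N ** (mat 1 - P) = P" using sums_unique2[OF s2[unfolded e2] tel] by simp
  show "(mat 1 + (\<Sum>m. matpow P (Suc m))) ** (mat 1 - P) = mat 1"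
    unfolding N_def[symmetric] by (simp only: mm_add_rdistrib matrix_mul_lid h) simp
qed

lemma summable_geom_matpow:
  fixes P :: "real^'n^'n"
  assumes b: "\<And>m u. (norm (matpow P m *v u))\<^sup>2 \<le> c * \<rho> ^ m * (norm u)\<^sup>2"
    and r: "0 \<le> \<rho>" "\<rho> < 1" and c: "c \<ge> 0"
  shows "summable (\<lambda>m. matpow P (Suc m))"
proof -
  have ent: "\<bar>matpow P m $ i $ j\<bar> \<le> sqrt c * sqrt \<rho> ^ m" for m i j
  proof -
    have "matpow P m $ i $ j = (matpow P m *v axis j 1) $ i"
      by (simp add: matrix_vector_mult_def axis_def if_distrib cong: if_cong)
    then have "\<bar>matpow P m $ i $ j\<bar> \<le> norm (matpow P m *v axis j 1)"
      using component_le_norm_cart by metis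
    also have "\<dots> \<le> sqrt (c * \<rho> ^ m)"
      using b[of m "axis j 1"] by (simp add: real_le_rsqrt)
    finally show ?thesis by (simp add: real_sqrt_mult real_sqrt_power)
  qed
  have nb: "norm (matpow P m) \<le> real (CARD('n)) * real (CARD('n)) * (sqrt c * sqrt \<rho> ^ m)" for m
  proof -
    have "norm (matpow P m) \<le> (\<Sum>i\<in>UNIV. norm (matpow P m $ i))"
      by (simp add: norm_vec_def L2_set_le_sum)
    also have "\<dots> \<le> (\<Sum>i\<in>(UNIV::'n set). \<Sum>j\<in>(UNIV::'n set). \<bar>matpow P m $ i $ j\<bar>)"
      by (intro sum_mono norm_le_l1_cart)
    also have "\<dots> \<le> (\<Sum>i\<in>(UNIV::'n set). \<Sum>j\<in>(UNIV::'n set). sqrt c * sqrt \<rho> ^ m)"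
      by (intro sum_mono ent)
    finally show ?thesis by simp
  qed
  have "summable (\<lambda>m. real (CARD('n)) * real (CARD('n)) * (sqrt c * sqrt \<rho> ^ m))"
    using r by (intro summable_mult summable_geometric) simp
  then have "summable (\<lambda>m. real (CARD('n)) * real (CARD('n)) * (sqrt c * sqrt \<rho> ^ Suc m))"
    by (subst summable_Suc_iff)
  then show ?thesis
    by (rule summable_comparison_test'[where N=0]) (use nb[of "Suc _"] in simp)
qed



lemma diag_mult:
  assumes diag: "\<forall>i j. i \<noteq> j \<longrightarrow> S $ i $ j = 0"
  shows "(S::real^'n^'n) *v x = (\<chi> i. S $ i $ i * x $ i)"
proof -
  have "(S *v x) $ i = S $ i $ i * x $ i" for i
  proof -
    have "(S *v x) $ i = (\<Sum>j\<in>UNIV. S $ i $ j * x $ j)"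
      by (simp add: matrix_vector_mult_def)
    also have "\<dots> = (\<Sum>j\<in>UNIV. if j = i then S $ i $ i * x $ i else 0)"
      by (rule sum.cong) (auto simp: diag)
    finally show ?thesis by simp
  qed
  then show ?thesis by (simp add: vec_eq_iff)
qed

lemma diag_norm_le:
  assumes diag: "\<forall>i j. i \<noteq> j \<longrightarrow> S $ i $ j = 0" and S01: "\<forall>i. 0 \<le> S $ i $ i \<and> S $ i $ i \<le> 1"
  shows "(norm ((S::real^'n^'n) *v x))\<^sup>2 \<le> (norm x)\<^sup>2"
proof -
  have "(norm (S *v x))\<^sup>2 = (\<Sum>i\<in>UNIV. (S $ i $ i * x $ i)\<^sup>2)"
    unfolding power2_norm_eq_inner diag_mult[OF diag] by (simp add: inner_vec_def power2_eq_square)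
  also have "\<dots> \<le> (\<Sum>i\<in>UNIV. (x $ i)\<^sup>2)"
  proof (intro sum_mono)
    fix i
    have "(S $ i $ i)\<^sup>2 \<le> 1" using S01 by (simp add: power_le_one abs_le_iff)
    then have "(S $ i $ i)\<^sup>2 * (x $ i)\<^sup>2 \<le> 1 * (x $ i)\<^sup>2" by (intro mult_right_mono) auto
    then show "(S $ i $ i * x $ i)\<^sup>2 \<le> (x $ i)\<^sup>2" by (simp add: power_mult_distrib)
  qed
  also have "\<dots> = (norm x)\<^sup>2" unfolding power2_norm_eq_inner by (simp add: inner_vec_def power2_eq_square)
  finally show ?thesis .
qed

lemma matrix_bounded: "\<exists>K\<ge>0. \<forall>x. norm ((A::real^'n^'n) *v x) \<le> K * norm x"
proof -
  have "bounded_linear ((*v) A)" using matrix_vector_mul_linear linear_conv_bounded_linear by blast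
  then obtain K where "K > 0" "\<And>x. norm (A *v x) \<le> norm x * K"
    using bounded_linear.pos_bounded by blast
  then show ?thesis by (metis less_imp_le mult.commute)
qed

lemma contraction:
  fixes A S :: "real^'n^'n" and t \<mu> K :: real
  assumes pA: "\<And>x. x \<bullet> (A *v x) \<ge> \<mu> * (norm x)\<^sup>2" and mu: "\<mu> > 0"
    and K: "K \<ge> 0" "\<And>x. norm (A *v x) \<le> K * norm x"
    and t: "t \<ge> 1"
    and diag: "\<forall>i j. i \<noteq> j \<longrightarrow> S $ i $ j = 0" and S01: "\<forall>i. 0 \<le> S $ i $ i \<and> S $ i $ i \<le> 1"
    and QQ: "Q' = mat 1 + (1/t) *\<^sub>R A" "Q' ** Q = mat 1"
  defines "\<delta> \<equiv> min (1/2) (\<mu> / (t * (1 + K)\<^sup>2))"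
  shows "((Q ** S) *v u) \<bullet> (Q' *v ((Q ** S) *v u)) \<le> (1 - \<delta>) * (u \<bullet> (Q' *v u))"
proof -
  define v where "v = S *v u"
  define p where "p = Q *v v"
  have Pu: "(Q ** S) *v u = p" by (simp add: p_def v_def matrix_vector_mul_assoc)
  have Qp: "Q' *v p = v" by (simp add: p_def matrix_vector_mul_assoc QQ(2))
  have vp: "v = p + (1/t) *\<^sub>R (A *v p)"
    using Qp unfolding QQ(1) by (simp add: matrix_vector_mult_add_rdistrib scaleR_matrix_vector_assoc[symmetric])
  have tp: "t > 0" using t by simp
  have Apos: "p \<bullet> (A *v p) \<ge> \<mu> * (norm p)\<^sup>2" using pA .
  have mu_p: "\<mu> * (norm p)\<^sup>2 \<ge> 0" using mu by simp
  have q1: "p \<bullet> v = (norm p)\<^sup>2 + (1/t) * (p \<bullet> (A *v p))"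
    unfolding vp by (simp add: inner_add_right power2_norm_eq_inner)
  have q2: "(norm v)\<^sup>2 \<ge> (norm p)\<^sup>2 + (2/t) * (p \<bullet> (A *v p))"
  proof -
    have "(norm v)\<^sup>2 = (norm p)\<^sup>2 + (2/t) * (p \<bullet> (A *v p)) + (1/t)\<^sup>2 * (norm (A *v p))\<^sup>2"
      unfolding vp power2_norm_eq_inner
      by (simp add: inner_add_left inner_add_right inner_commute power2_eq_square field_simps)
    then show ?thesis by simp
  qed
  have nv: "norm v \<le> (1 + K) * norm p"
  proof -
    have "norm v \<le> norm p + norm ((1/t) *\<^sub>R (A *v p))" unfolding vp by (rule norm_triangle_ineq)
    also have "norm ((1/t) *\<^sub>R (A *v p)) = (1/t) * norm (A *v p)" using tp by simp
    also have "\<dots> \<le> 1 * (K * norm p)"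
      using K(2)[of p] t by (intro mult_mono) (auto simp: K(1))
    finally show ?thesis by (simp add: algebra_simps)
  qed
  have nv2: "(norm v)\<^sup>2 \<le> (1 + K)\<^sup>2 * (norm p)\<^sup>2"
    using nv by (metis norm_ge_zero power_mono power_mult_distrib)
  have pos1K: "(1 + K)\<^sup>2 > 0" using K by simp
  have "p \<bullet> v \<le> (norm v)\<^sup>2 - (1/t) * (p \<bullet> (A *v p))" using q1 q2 by simp
  also have "(1/t) * (p \<bullet> (A *v p)) \<ge> (\<mu> / (t * (1 + K)\<^sup>2)) * (norm v)\<^sup>2"
  proof -
    have "(\<mu> / (t * (1 + K)\<^sup>2)) * (norm v)\<^sup>2 \<le> (\<mu> / (t * (1 + K)\<^sup>2)) * ((1 + K)\<^sup>2 * (norm p)\<^sup>2)"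
      using nv2 mu tp pos1K by (intro mult_left_mono) auto
    also have "\<dots> = (1/t) * (\<mu> * (norm p)\<^sup>2)" using pos1K tp by (simp add: field_simps)
    also have "\<dots> \<le> (1/t) * (p \<bullet> (A *v p))" using Apos tp by (intro mult_left_mono) auto
    finally show ?thesis .
  qed
  then have "(norm v)\<^sup>2 - (1/t) * (p \<bullet> (A *v p)) \<le> (norm v)\<^sup>2 - \<delta> * (norm v)\<^sup>2"
    unfolding \<delta>_def by (smt (verit) min.cobounded2 mult_right_mono zero_le_power2)
  also have "\<dots> = (1 - \<delta>) * (norm v)\<^sup>2" by (simp add: algebra_simps)
  also have "\<dots> \<le> (1 - \<delta>) * (norm u)\<^sup>2"
    using diag_norm_le[OF diag S01, of u] unfolding v_def[symmetric]
    by (intro mult_left_mono) (auto simp: \<delta>_def)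
  also have "(norm u)\<^sup>2 \<le> u \<bullet> (Q' *v u)"
  proof -
    have "u \<bullet> (Q' *v u) = (norm u)\<^sup>2 + (1/t) * (u \<bullet> (A *v u))"
      unfolding QQ(1) by (simp add: matrix_vector_mult_add_rdistrib scaleR_matrix_vector_assoc[symmetric] inner_add_right power2_norm_eq_inner)
    moreover have "u \<bullet> (A *v u) \<ge> 0" using pA[of u] mu by (smt (verit) mult_nonneg_nonneg zero_le_power2)
    ultimately show ?thesis using tp by simp
  qed
  then have "(1 - \<delta>) * (norm u)\<^sup>2 \<le> (1 - \<delta>) * (u \<bullet> (Q' *v u))"
    by (intro mult_left_mono) (auto simp: \<delta>_def)
  finally show ?thesis unfolding Pu Qp .
qed



lemma series_identity:
  fixes Gm S :: "real^'n^'n" and t :: real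
  assumes pd: "pos_def_matrix Gm" and t: "t \<ge> 1"
    and diag: "\<forall>i j. i \<noteq> j \<longrightarrow> S $ i $ j = 0" and S01: "\<forall>i. 0 \<le> S $ i $ i \<and> S $ i $ i \<le> 1"
  shows "(1 / t) *\<^sub>R (\<Sum>m. matpow (Qmat Gm t ** S) (Suc m))
       = matrix_inv (matrix_inv Gm + Lam t S) ** (mat 1 + (1/t) *\<^sub>R matrix_inv Gm) - (1/t) *\<^sub>R mat 1"
proof -
  define A where "A = matrix_inv Gm"
  note iv = inv_posdef[OF pd]
  have pA: "\<And>x. x \<noteq> 0 \<Longrightarrow> x \<bullet> (A *v x) > 0" using iv(3) unfolding A_def .
  have tp: "t > 0" using t by simp
  define Q' where "Q' = mat 1 + (1/t) *\<^sub>R A"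
  have it: "matrix_inv (t *\<^sub>R Gm) = (1/t) *\<^sub>R A"
  proof (rule matrix_inv_unique)
    have "(t *\<^sub>R Gm) ** ((1/t) *\<^sub>R A) = (t * (1/t)) *\<^sub>R (Gm ** A)"
      by (simp add: matrix_scalar_ac scalar_matrix_assoc[symmetric])
    also have "\<dots> = mat 1" using tp by (simp add: A_def matrix_inv_props[OF iv(1)])
    finally show "(t *\<^sub>R Gm) ** ((1/t) *\<^sub>R A) = mat 1" .
  qed
  have qQ: "x \<bullet> (Q' *v x) = (norm x)\<^sup>2 + (1/t) * (x \<bullet> (A *v x))" for x
    unfolding Q'_def by (simp add: matrix_vector_mult_add_rdistrib scaleR_matrix_vector_assoc[symmetric] inner_add_right power2_norm_eq_inner)
  have Anon: "x \<bullet> (A *v x) \<ge> 0" for x using pA[of x] by (cases "x = 0") auto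
  have pQ: "x \<noteq> 0 \<Longrightarrow> x \<bullet> (Q' *v x) > 0" for x
    using qQ[of x] Anon[of x] tp by (simp add: add_pos_nonneg)
  have iQ: "invertible Q'" using posdef_invertible pQ by blast
  define Q where "Q = matrix_inv Q'"
  have Qm: "Qmat Gm t = Q" unfolding Qmat_def Q_def Q'_def it A_def ..
  have QQ: "Q' ** Q = mat 1" "Q ** Q' = mat 1" unfolding Q_def using matrix_inv_props[OF iQ] by auto
  obtain \<mu> where mu: "\<mu> > 0" "\<And>x. x \<bullet> (A *v x) \<ge> \<mu> * (norm x)\<^sup>2"
    using posdef_lower[OF pA] by blast
  obtain K where K: "K \<ge> 0" "\<And>x. norm (A *v x) \<le> K * norm x" using matrix_bounded by blast
  define \<delta> where "\<delta> = min (1/2) (\<mu> / (t * (1 + K)\<^sup>2))"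
  define P where "P = Q ** S"
  have con: "(P *v u) \<bullet> (Q' *v (P *v u)) \<le> (1 - \<delta>) * (u \<bullet> (Q' *v u))" for u
    unfolding P_def \<delta>_def using contraction[OF mu(2) mu(1) K t diag S01 Q'_def QQ(1)] .
  have d: "0 < \<delta>" "\<delta> \<le> 1/2" using mu tp K by (auto simp: \<delta>_def min_def)
  have it: "(matpow P m *v u) \<bullet> (Q' *v (matpow P m *v u)) \<le> (1 - \<delta>) ^ m * (u \<bullet> (Q' *v u))" for m u
  proof (induction m)
    case 0 then show ?case by simp
  next
    case (Suc m)
    have "(matpow P (Suc m) *v u) = P *v (matpow P m *v u)" by (simp add: matrix_vector_mul_assoc)
    then have "(matpow P (Suc m) *v u) \<bullet> (Q' *v (matpow P (Suc m) *v u))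
        \<le> (1 - \<delta>) * ((matpow P m *v u) \<bullet> (Q' *v (matpow P m *v u)))" using con by simp
    also have "\<dots> \<le> (1 - \<delta>) * ((1 - \<delta>) ^ m * (u \<bullet> (Q' *v u)))"
      using Suc d by (intro mult_left_mono) auto
    finally show ?case by simp
  qed
  have qlow: "(norm x)\<^sup>2 \<le> x \<bullet> (Q' *v x)" for x using qQ[of x] Anon[of x] tp by simp
  have qup: "x \<bullet> (Q' *v x) \<le> (1 + K) * (norm x)\<^sup>2" for x
  proof -
    have "x \<bullet> (A *v x) \<le> norm x * norm (A *v x)" by (metis Cauchy_Schwarz_ineq2 abs_le_iff)
    also have "\<dots> \<le> norm x * (K * norm x)" using K(2) by (intro mult_left_mono) auto
    finally have "x \<bullet> (A *v x) \<le> K * (norm x)\<^sup>2" by (simp add: power2_eq_square mult_ac)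
    moreover have "(1/t) * (x \<bullet> (A *v x)) \<le> x \<bullet> (A *v x)" using t Anon[of x]
      by (simp add: field_simps) (metis mult_le_cancel_left1 Anon linorder_not_le mult.commute order_less_le)
    ultimately show ?thesis using qQ[of x] by (simp add: algebra_simps)
  qed
  have bnd: "(norm (matpow P m *v u))\<^sup>2 \<le> (1 + K) * (1 - \<delta>) ^ m * (norm u)\<^sup>2" for m u
  proof -
    have "(norm (matpow P m *v u))\<^sup>2 \<le> (1 - \<delta>) ^ m * (u \<bullet> (Q' *v u))"
      using qlow it order_trans by blast
    also have "\<dots> \<le> (1 - \<delta>) ^ m * ((1 + K) * (norm u)\<^sup>2)"
      using qup d by (intro mult_left_mono) auto
    finally show ?thesis by (simp add: mult_ac)
  qed
  have sm: "summable (\<lambda>m. matpow P (Suc m))"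
    by (rule summable_geom_matpow[OF bnd]) (use d K in auto)
  define N where "N = (\<Sum>m. matpow P (Suc m))"
  define L where "L = Lam t S"
  define B where "B = A + L"
  have pL: "\<And>x. x \<bullet> (L *v x) \<ge> 0" unfolding L_def using Lam_psd[OF diag] tp S01 by auto
  have pB: "x \<noteq> 0 \<Longrightarrow> x \<bullet> (B *v x) > 0" for x
    using pA[of x] pL[of x] by (simp add: B_def matrix_vector_mult_add_rdistrib inner_add_right add_pos_nonneg)
  have iB: "invertible B" using posdef_invertible pB by blast
  define X where "X = t *\<^sub>R (matrix_inv B ** Q')"
  have tQS: "t *\<^sub>R (Q' - S) = B"
    unfolding B_def L_def Lam_def Q'_def using tp by (simp add: algebra_simps)
  have IP: "mat 1 - P = Q ** (Q' - S)" unfolding P_def by (simp add: mm_sub_ldistrib QQ(2))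
  have "(mat 1 - P) ** X = Q ** (t *\<^sub>R (Q' - S)) ** matrix_inv B ** Q'"
    unfolding IP X_def by (simp add: matrix_mul_assoc matrix_scalar_ac scalar_matrix_assoc)
  also have "\<dots> = mat 1" unfolding tQS
    by (simp add: matrix_mul_assoc[symmetric]) (simp add: matrix_mul_assoc matrix_inv_props[OF iB] QQ(2))
  finally have PX: "(mat 1 - P) ** X = mat 1" .
  have "mat 1 + N = (mat 1 + N) ** ((mat 1 - P) ** X)" using PX by simp
  also have "\<dots> = X" unfolding matrix_mul_assoc neumann(2)[OF sm, folded N_def] by simp
  finally have "N = X - mat 1" by (simp add: algebra_simps)
  then have "N + mat 1 = X" by simp
  then have "(1/t) *\<^sub>R (N + mat 1) = matrix_inv B ** Q'"
    unfolding X_def using tp by simp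
  then have "(1/t) *\<^sub>R N = matrix_inv B ** Q' - (1/t) *\<^sub>R mat 1"
    by (simp add: scaleR_add_right eq_diff_eq)
  then show ?thesis unfolding N_def P_def Qm B_def L_def A_def Q'_def .
qed



lemma quad_disc:
  fixes a b c :: real
  assumes h: "\<And>l. a + 2 * l * b + l\<^sup>2 * c \<ge> 0" and c: "c \<ge> 0"
  shows "b\<^sup>2 \<le> a * c"
proof (cases "c = 0")
  case True
  have "b = 0"
  proof (rule ccontr)
    assume b: "b \<noteq> 0"
    have "a + 2 * (- (a + 1) / (2 * b)) * b + (- (a + 1) / (2 * b))\<^sup>2 * c \<ge> 0" by (rule h)
    then show False using b True by (simp add: field_simps)
  qed
  then show ?thesis using True by simp
next
  case False
  then have cp: "c > 0" using c by simp
  have "a + 2 * (- b / c) * b + (- b / c)\<^sup>2 * c \<ge> 0" by (rule h)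
  then have "a - b\<^sup>2 / c \<ge> 0" using cp by (simp add: power2_eq_square field_simps)
  then show ?thesis using cp by (simp add: field_simps)
qed

lemma quad_CS:
  fixes M :: "real^'n^'n"
  assumes sM: "transpose M = M" and pM: "\<And>x. x \<bullet> (M *v x) \<ge> 0"
  shows "(u \<bullet> (M *v w))\<^sup>2 \<le> (u \<bullet> (M *v u)) * (w \<bullet> (M *v w))"
proof (rule quad_disc[OF _ pM])
  fix l :: real
  have "(u + l *\<^sub>R w) \<bullet> (M *v (u + l *\<^sub>R w)) = u \<bullet> (M *v u) + 2 * l * (u \<bullet> (M *v w)) + l\<^sup>2 * (w \<bullet> (M *v w))"
    using dot_transpose_sym[OF sM, of w u]
    by (simp add: matrix_vector_right_distrib matrix_vector_mult_scaleR inner_add_left inner_add_right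
        power2_eq_square algebra_simps)
  then show "u \<bullet> (M *v u) + 2 * l * (u \<bullet> (M *v w)) + l\<^sup>2 * (w \<bullet> (M *v w)) \<ge> 0"
    using pM[of "u + l *\<^sub>R w"] by simp
qed

lemma algebra_X:
  fixes A L :: "real^'n^'n" and t :: real
  assumes sA: "transpose A = A" and sL: "transpose L = L" and iB: "invertible (A + L)" and t: "t > 0"
  defines "y \<equiv> matrix_inv (A + L) *v (L *v ones)"
  defines "D \<equiv> A *v ones"
  shows "- (ones \<bullet> (A *v ones)) + D \<bullet> ((matrix_inv (A + L) ** (mat 1 + (1/t) *\<^sub>R A) - (1/t) *\<^sub>R mat 1) *v D)
           = - (D \<bullet> y) - (1/t) * (D \<bullet> (A *v y))"
    "ones \<bullet> (L *v ones) - (L *v ones) \<bullet> y = D \<bullet> y"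
proof -
  define B where "B = A + L"
  define Bi where "Bi = matrix_inv B"
  have sB: "transpose B = B" using sA sL by (simp add: B_def transpose_def vec_eq_iff)
  have iB': "invertible B" using iB unfolding B_def .
  have sBi: "transpose Bi = Bi" unfolding Bi_def using transpose_matrix_inv[OF iB' sB] .
  have By: "B *v y = L *v ones" unfolding y_def B_def[symmetric]
    by (simp add: matrix_vector_mul_assoc matrix_mul_assoc matrix_inv_props[OF iB'])
  have BiD: "Bi *v D = ones - y"
  proof -
    have "B *v (ones - y) = D" using By by (simp add: D_def B_def matrix_vector_mult_diff_distrib matrix_vector_mult_add_rdistrib)
    then have "Bi *v D = (Bi ** B) *v (ones - y)" by (metis matrix_vector_mul_assoc)
    then show ?thesis by (simp add: Bi_def matrix_inv_props[OF iB'])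
  qed
  have e1: "D \<bullet> (Bi *v (A *v D)) = (A *v D) \<bullet> (ones - y)"
    using dot_transpose_sym[OF sBi, of D "A *v D"] BiD by simp
  have e2: "(A *v D) \<bullet> ones = D \<bullet> D" using dot_transpose_sym[OF sA, of ones D] by (simp add: D_def inner_commute)
  have e3: "(A *v D) \<bullet> y = D \<bullet> (A *v y)" using dot_transpose_sym[OF sA, of y D] by (simp add: inner_commute)
  have e4: "D \<bullet> ones = ones \<bullet> (A *v ones)" by (simp add: D_def inner_commute)
  have "(Bi ** (mat 1 + (1/t) *\<^sub>R A) - (1/t) *\<^sub>R mat 1) *v D
      = Bi *v D + (1/t) *\<^sub>R (Bi *v (A *v D)) - (1/t) *\<^sub>R D"
    by (simp add: matrix_vector_mult_diff_rdistrib matrix_vector_mul_assoc[symmetric] matrix_add_ldistrib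
        matrix_vector_mult_add_rdistrib scaleR_matrix_vector_assoc[symmetric] matrix_scalar_ac
        matrix_vector_mult_scaleR)
  then have "D \<bullet> ((Bi ** (mat 1 + (1/t) *\<^sub>R A) - (1/t) *\<^sub>R mat 1) *v D)
      = D \<bullet> (ones - y) + (1/t) * ((A *v D) \<bullet> (ones - y)) - (1/t) * (D \<bullet> D)"
    using BiD e1 by (simp add: inner_add_right inner_diff_right)
  also have "\<dots> = ones \<bullet> (A *v ones) - D \<bullet> y - (1/t) * (D \<bullet> (A *v y))"
    using e2 e3 e4 by (simp add: inner_diff_right inner_diff_left algebra_simps)
  finally show "- (ones \<bullet> (A *v ones)) + D \<bullet> ((matrix_inv (A + L) ** (mat 1 + (1/t) *\<^sub>R A) - (1/t) *\<^sub>R mat 1) *v D)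
           = - (D \<bullet> y) - (1/t) * (D \<bullet> (A *v y))" unfolding Bi_def B_def by simp
  have Ay: "A *v y = L *v ones - L *v y" using By unfolding B_def
    by (simp add: matrix_vector_mult_add_rdistrib eq_diff_eq)
  have "D \<bullet> y = ones \<bullet> (A *v y)" using dot_transpose_sym[OF sA, of y ones] by (simp add: D_def inner_commute)
  also have "\<dots> = ones \<bullet> (L *v ones) - ones \<bullet> (L *v y)" unfolding Ay by (simp add: inner_diff_right)
  also have "ones \<bullet> (L *v y) = (L *v ones) \<bullet> y" using dot_transpose_sym[OF sL, of ones y] by (simp add: inner_commute)
  finally show "ones \<bullet> (L *v ones) - (L *v ones) \<bullet> y = D \<bullet> y" by simp
qed



lemma final_real:
  fixes e \<delta> K t \<alpha> :: real
  assumes e: "e \<ge> 0" and d: "\<bar>\<delta>\<bar> \<le> K * e" and K: "K \<ge> 0" and t: "t \<ge> 2 * K" "t > 0"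
  shows "\<exists>r. \<bar>r\<bar> \<le> 2 * K / t \<and> - (\<alpha>\<^sup>2 / 2) * e = \<alpha>\<^sup>2 / 2 * (- e - \<delta> / t) * (1 + r)"
proof (cases "e = 0")
  case True
  then have "\<delta> = 0" using d by simp
  then show ?thesis using True K t by (intro exI[of _ 0]) auto
next
  case False
  then have ep: "e > 0" using e by simp
  have dt: "\<bar>\<delta> / t\<bar> \<le> K * e / t" using d t by (simp add: abs_div divide_right_mono)
  have "K * e / t \<le> e / 2" using t ep K by (simp add: field_simps)
  then have dt2: "\<bar>\<delta> / t\<bar> \<le> e / 2" using dt by linarith
  define X where "X = - e - \<delta> / t"
  have X: "- X \<ge> e / 2" unfolding X_def using dt2 abs_ge_minus_self[of "\<delta> / t"] by linarith
  then have Xnz: "X \<noteq> 0" using ep by auto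
  define r where "r = (\<delta> / t) / X"
  have Xr: "X * r = \<delta> / t" unfolding r_def using Xnz by simp
  have eq: "X * (1 + r) = - e" by (simp add: distrib_left Xr) (simp add: X_def)
  have "\<bar>r\<bar> = \<bar>\<delta> / t\<bar> / \<bar>X\<bar>" unfolding r_def by (rule abs_divide)
  also have "\<dots> \<le> (K * e / t) / (e / 2)"
    using dt X ep K t by (intro frac_le) auto
  also have "\<dots> = 2 * K / t" using ep by (simp add: field_simps)
  finally show ?thesis using eq unfolding X_def[symmetric]
    by (intro exI[of _ r]) (simp add: mult.assoc)
qed

lemma bound_lemma:
  fixes A S :: "real^'n^'n" and t \<mu> :: real and y :: "real^'n"
  assumes sA: "transpose A = A" and mu: "\<mu> > 0" and pA: "\<And>x. x \<bullet> (A *v x) \<ge> \<mu> * (norm x)\<^sup>2"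
    and diag: "\<forall>i j. i \<noteq> j \<longrightarrow> S $ i $ j = 0" and S01: "\<forall>i. 0 \<le> S $ i $ i \<and> S $ i $ i \<le> 1"
    and t: "t \<ge> 0"
    and Ay: "A *v y = Lam t S *v (ones - y)"
  defines "D \<equiv> A *v ones"
  shows "D \<bullet> y \<ge> 0" "(D \<bullet> (A *v y))\<^sup>2 \<le> (4 * (D \<bullet> (A *v D)) / \<mu> + 4 * (D \<bullet> D)) * (D \<bullet> y)\<^sup>2"
proof -
  define L where "L = Lam t S"
  define l where "l = (\<lambda>i. t * (1 - S $ i $ i))"
  have l0: "l i \<ge> 0" for i using t S01 by (simp add: l_def)
  have Lq: "x \<bullet> (L *v z) = (\<Sum>i\<in>UNIV. l i * x $ i * z $ i)" for x z
    unfolding L_def l_def Lam_quad[OF diag] ..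
  have sL: "transpose L = L" unfolding L_def using Lam_sym[OF diag] .
  have pL: "\<And>x. x \<bullet> (L *v x) \<ge> 0" unfolding L_def using Lam_psd[OF diag t] S01 by auto
  have pA0: "\<And>x. x \<bullet> (A *v x) \<ge> 0" using pA mu by (smt (verit) mult_nonneg_nonneg zero_le_power2)
  define a where "a = y \<bullet> (A *v y)"
  define b where "b = (ones - y) \<bullet> (L *v (ones - y))"
  have a0: "a \<ge> 0" "a \<ge> \<mu> * (norm y)\<^sup>2" using pA0 pA by (auto simp: a_def)
  have b0: "b \<ge> 0" using pL by (simp add: b_def)
  have Dy: "D \<bullet> y = a + b"
  proof -
    have "D \<bullet> y = ones \<bullet> (A *v y)" using dot_transpose_sym[OF sA, of y ones] by (simp add: D_def inner_commute)
    also have "\<dots> = y \<bullet> (A *v y) + (ones - y) \<bullet> (A *v y)" by (simp add: inner_diff_left)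
    also have "(ones - y) \<bullet> (A *v y) = b" unfolding b_def Ay L_def ..
    finally show ?thesis by (simp add: a_def)
  qed
  then show "D \<bullet> y \<ge> 0" using a0 b0 by simp
  define dA where "dA = D \<bullet> (A *v D)"
  have dA0: "dA \<ge> 0" using pA0 by (simp add: dA_def)
  have dD0: "D \<bullet> D \<ge> 0" by simp
  have cs1: "(D \<bullet> (A *v y))\<^sup>2 \<le> dA * a" unfolding dA_def a_def by (rule quad_CS[OF sA pA0])
  have cs2: "(D \<bullet> (A *v y))\<^sup>2 \<le> (D \<bullet> (L *v D)) * b"
    unfolding Ay L_def[symmetric] b_def by (rule quad_CS[OF sL pL])
  have DLD: "D \<bullet> (L *v D) \<le> (D \<bullet> D) * (\<Sum>i\<in>UNIV. l i)"
  proof -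
    have "D \<bullet> (L *v D) = (\<Sum>i\<in>UNIV. l i * (D $ i)\<^sup>2)" unfolding Lq by (simp add: power2_eq_square mult_ac)
    also have "\<dots> \<le> (\<Sum>i\<in>UNIV. l i * (D \<bullet> D))"
    proof (intro sum_mono mult_left_mono l0)
      fix i
      have "\<bar>D $ i\<bar> \<le> norm D" by (rule component_le_norm_cart)
      then have "(D $ i)\<^sup>2 \<le> (norm D)\<^sup>2" by (metis abs_ge_zero power2_abs power_mono)
      then show "(D $ i)\<^sup>2 \<le> D \<bullet> D" by (simp add: power2_norm_eq_inner)
    qed
    also have "\<dots> = (D \<bullet> D) * (\<Sum>i\<in>UNIV. l i)" by (simp add: sum_distrib_right mult_ac)
    finally show ?thesis .
  qed
  define K2 where "K2 = 4 * dA / \<mu> + 4 * (D \<bullet> D)"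
  have "(D \<bullet> (A *v y))\<^sup>2 \<le> K2 * (a + b)\<^sup>2"
  proof (cases "a < \<mu> / 4")
    case True
    have yi: "(y $ i)\<^sup>2 < 1/4" for i
    proof -
      have "\<bar>y $ i\<bar> \<le> norm y" by (rule component_le_norm_cart)
      then have "(y $ i)\<^sup>2 \<le> (norm y)\<^sup>2" by (metis abs_ge_zero power2_abs power_mono)
      moreover have "\<mu> * (norm y)\<^sup>2 < \<mu> / 4" using a0 True by linarith
      then have "(norm y)\<^sup>2 < 1/4" using mu by (simp add: field_simps)
      ultimately show ?thesis by linarith
    qed
    have li: "l i \<le> 4 * (l i * (1 - y $ i)\<^sup>2)" for i
    proof -
      have "\<bar>y $ i\<bar> < 1/2"
      proof (rule ccontr)
        assume "\<not> \<bar>y $ i\<bar> < 1/2"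
        then have "(1/2)\<^sup>2 \<le> \<bar>y $ i\<bar>\<^sup>2" by (intro power_mono) auto
        then have "1/4 \<le> (y $ i)\<^sup>2" by (simp add: power2_eq_square)
        then show False using yi[of i] by linarith
      qed
      then have "1 - y $ i \<ge> 1/2" by (simp add: abs_less_iff)
      then have "(1/2)\<^sup>2 \<le> (1 - y $ i)\<^sup>2" by (intro power_mono) auto
      then have "1 \<le> 4 * (1 - y $ i)\<^sup>2" by (simp add: power2_eq_square)
      then show ?thesis using l0[of i] by (metis mult.left_commute mult_le_cancel_left1 mult_1_right
          order_less_le not_le mult_le_cancel_left_pos mult.commute)
    qed
    have sl: "(\<Sum>i\<in>UNIV. l i) \<le> 4 * b"
    proof -
      have "(\<Sum>i\<in>UNIV. l i) \<le> (\<Sum>i\<in>UNIV. 4 * (l i * (1 - y $ i)\<^sup>2))" by (intro sum_mono li)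
      also have "\<dots> = 4 * b" unfolding b_def Lq by (simp add: sum_distrib_left power2_eq_square mult_ac ones_def)
      finally show ?thesis .
    qed
    have "(D \<bullet> (A *v y))\<^sup>2 \<le> ((D \<bullet> D) * (\<Sum>i\<in>UNIV. l i)) * b"
      using cs2 DLD b0 by (meson mult_right_mono order_trans)
    also have "\<dots> \<le> ((D \<bullet> D) * (4 * b)) * b" using sl dD0 b0 by (intro mult_right_mono mult_left_mono) auto
    also have "\<dots> = 4 * (D \<bullet> D) * b\<^sup>2" by (simp add: power2_eq_square)
    also have "\<dots> \<le> 4 * (D \<bullet> D) * (a + b)\<^sup>2" using a0 b0 dD0 by (intro mult_left_mono power_mono) auto
    also have "\<dots> \<le> K2 * (a + b)\<^sup>2" unfolding K2_def using dA0 mu by (intro mult_right_mono) auto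
    finally show ?thesis .
  next
    case False
    then have a4: "1 \<le> 4 * a / \<mu>" using mu by (simp add: field_simps)
    have "(D \<bullet> (A *v y))\<^sup>2 \<le> dA * a" by (rule cs1)
    also have "\<dots> \<le> dA * a * (4 * a / \<mu>)" using a4 dA0 a0 mult_left_mono[OF a4, of "dA * a"] by simp
    also have "\<dots> = (4 * dA / \<mu>) * a\<^sup>2" by (simp add: power2_eq_square field_simps)
    also have "\<dots> \<le> (4 * dA / \<mu>) * (a + b)\<^sup>2" using a0 b0 dA0 mu by (intro mult_left_mono power_mono) auto
    also have "\<dots> \<le> K2 * (a + b)\<^sup>2" unfolding K2_def using dD0 by (intro mult_right_mono) auto
    finally show ?thesis .
  qed
  then show "(D \<bullet> (A *v y))\<^sup>2 \<le> (4 * (D \<bullet> (A *v D)) / \<mu> + 4 * (D \<bullet> D)) * (D \<bullet> y)\<^sup>2"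
    unfolding Dy K2_def dA_def .
qed



lemma Dvec_eq: "Dvec Gm = matrix_inv Gm *v ones"
  by (simp add: Dvec_def ones_def matrix_vector_mult_def vec_eq_iff)

theorem theorem1p6:
  fixes Gm :: "real^'n^'n" and \<alpha> :: real
  assumes "pos_def_matrix Gm"
    and "irreducible_matrix Gm"
  shows "\<exists>C T. \<forall>t \<ge> T. \<forall>S :: real^'n^'n.
           (\<forall>i j. i \<noteq> j \<longrightarrow> S $ i $ j = 0) \<and> (\<forall>i. 0 \<le> S $ i $ i \<and> S $ i $ i \<le> 1) \<longrightarrow>
           (\<exists>r. \<bar>r\<bar> \<le> C / t \<and>
              Phi2 Gm \<alpha> t S =
                \<alpha>\<^sup>2 / 2 * (- (ones \<bullet> (matrix_inv Gm *v ones))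
                   + Dvec Gm \<bullet> (((1 / t) *\<^sub>R (\<Sum>m. matpow (Qmat Gm t ** S) (Suc m))) *v Dvec Gm))
                * (1 + r))"
proof -
  note pd = assms(1)
  define A where "A = matrix_inv Gm"
  note iv = inv_posdef[OF pd]
  have sA: "transpose A = A" using iv(2) unfolding A_def .
  have pA: "\<And>x. x \<noteq> 0 \<Longrightarrow> x \<bullet> (A *v x) > 0" using iv(3) unfolding A_def .
  obtain \<mu> where mu: "\<mu> > 0" "\<And>x. x \<bullet> (A *v x) \<ge> \<mu> * (norm x)\<^sup>2"
    using posdef_lower[OF pA] by blast
  have pA0: "\<And>x. x \<bullet> (A *v x) \<ge> 0" using mu by (smt (verit) mult_nonneg_nonneg zero_le_power2)
  define D where "D = A *v ones"
  have DD: "Dvec Gm = D" unfolding D_def A_def by (rule Dvec_eq)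
  define K2 where "K2 = 4 * (D \<bullet> (A *v D)) / \<mu> + 4 * (D \<bullet> D)"
  have K20: "K2 \<ge> 0" unfolding K2_def using pA0[of D] mu by simp
  define K where "K = sqrt K2"
  have K0: "K \<ge> 0" unfolding K_def using K20 by simp
  show ?thesis
  proof (rule exI[of _ "2 * K"], rule exI[of _ "2 * K + 1"], intro allI impI, elim conjE)
    fix t :: real and S :: "real^'n^'n"
    assume tT: "2 * K + 1 \<le> t" and diag: "\<forall>i j. i \<noteq> j \<longrightarrow> S $ i $ j = 0"
      and S01: "\<forall>i. 0 \<le> S $ i $ i \<and> S $ i $ i \<le> 1"
    have t1: "t \<ge> 1" and t2: "t \<ge> 2 * K" and tp: "t > 0" using tT K0 by auto
    have S1: "\<forall>i. S $ i $ i \<le> 1" using S01 by auto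
    define L where "L = Lam t S"
    define y where "y = matrix_inv (A + L) *v (L *v ones)"
    have sL: "transpose L = L" unfolding L_def using Lam_sym[OF diag] .
    have pL: "\<And>x. x \<bullet> (L *v x) \<ge> 0" unfolding L_def using Lam_psd[OF diag] tp S1 by auto
    have pB: "x \<noteq> 0 \<Longrightarrow> x \<bullet> ((A + L) *v x) > 0" for x
      using pA[of x] pL[of x] by (simp add: matrix_vector_mult_add_rdistrib inner_add_right add_pos_nonneg)
    have iB: "invertible (A + L)" using posdef_invertible pB by blast
    have By: "(A + L) *v y = L *v ones" unfolding y_def
      by (simp add: matrix_vector_mul_assoc matrix_mul_assoc matrix_inv_props[OF iB])
    have Ay: "A *v y = Lam t S *v (ones - y)" using By unfolding L_def[symmetric]
      by (simp add: matrix_vector_mult_add_rdistrib matrix_vector_mult_diff_distrib eq_diff_eq)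
    have P2: "Phi2 Gm \<alpha> t S = - (\<alpha>\<^sup>2 / 2) * (ones \<bullet> (L *v ones) - (L *v ones) \<bullet> y)"
      using Phi2_formula[OF pd diag _ S1, of t \<alpha>] tp unfolding L_def[symmetric] A_def[symmetric] y_def by simp
    have SI: "(1 / t) *\<^sub>R (\<Sum>m. matpow (Qmat Gm t ** S) (Suc m))
       = matrix_inv (A + L) ** (mat 1 + (1/t) *\<^sub>R A) - (1/t) *\<^sub>R mat 1"
      using series_identity[OF pd t1 diag S01] unfolding L_def[symmetric] A_def[symmetric] .
    note AX = algebra_X[OF sA sL iB tp, folded y_def D_def]
    note BL = bound_lemma[OF sA mu(1) mu(2) diag S01 _ Ay, folded D_def] 
    have e0: "D \<bullet> y \<ge> 0" using BL(1) tp by simp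
    have sq: "(D \<bullet> (A *v y))\<^sup>2 \<le> K2 * (D \<bullet> y)\<^sup>2" using BL(2) tp unfolding K2_def by simp
    have dK: "\<bar>D \<bullet> (A *v y)\<bar> \<le> K * (D \<bullet> y)"
    proof -
      have "sqrt ((D \<bullet> (A *v y))\<^sup>2) \<le> sqrt (K2 * (D \<bullet> y)\<^sup>2)" using sq by (rule real_sqrt_le_mono)
      then show ?thesis unfolding K_def using e0 K20 by (simp add: real_sqrt_mult)
    qed
    obtain r where r: "\<bar>r\<bar> \<le> 2 * K / t"
      "- (\<alpha>\<^sup>2 / 2) * (D \<bullet> y) = \<alpha>\<^sup>2 / 2 * (- (D \<bullet> y) - (D \<bullet> (A *v y)) / t) * (1 + r)"
      using final_real[OF e0 dK K0 t2 tp, of \<alpha>] by blast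
    show "\<exists>r. \<bar>r\<bar> \<le> 2 * K / t \<and>
              Phi2 Gm \<alpha> t S =
                \<alpha>\<^sup>2 / 2 * (- (ones \<bullet> (matrix_inv Gm *v ones))
                   + Dvec Gm \<bullet> (((1 / t) *\<^sub>R (\<Sum>m. matpow (Qmat Gm t ** S) (Suc m))) *v Dvec Gm))
                * (1 + r)"
    proof (intro exI[of _ r] conjI r(1))
      have "- (ones \<bullet> (matrix_inv Gm *v ones))
                   + Dvec Gm \<bullet> (((1 / t) *\<^sub>R (\<Sum>m. matpow (Qmat Gm t ** S) (Suc m))) *v Dvec Gm)
          = - (D \<bullet> y) - (D \<bullet> (A *v y)) / t"
        unfolding SI DD A_def[symmetric] D_def[symmetric] using AX(1) by simp
      moreover have "Phi2 Gm \<alpha> t S = - (\<alpha>\<^sup>2 / 2) * (D \<bullet> y)" unfolding P2 AX(2) ..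
      ultimately show "Phi2 Gm \<alpha> t S =
                \<alpha>\<^sup>2 / 2 * (- (ones \<bullet> (matrix_inv Gm *v ones))
                   + Dvec Gm \<bullet> (((1 / t) *\<^sub>R (\<Sum>m. matpow (Qmat Gm t ** S) (Suc m))) *v Dvec Gm))
                * (1 + r)" using r(2) by simp
    qed
  qed
qed

end
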